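(* Let $f,g:\mathbb{R}^n\to[0,+\infty)$ and $h_1,h_2:\mathbb{R}^n\to\mathbb{R}$, let $C\subseteq\mathbb{R}^n$ be closed and convex, $\Omega:=\{x:g(x)\neq0\}$, $C\cap\Omega\neq\emptyset$, and assume: $f$ is convex; $g$ is differentiable with locally Lipschitz gradient; $h_1$ is differentiable with locally Lipschitz gradient; $h_2$ is convex. Let $F(x)=f^2(x)/g(x)+h_1(x)-h_2(x)$ for $x\in\Omega\cap C$ and $F(x)=+\infty$ otherwise, let $x^0\in\mathrm{dom}F$, and assume that $\mathcal{X}_0:=\{x\in\mathrm{dom}F:F(x)\le F(x^0)\}$ is compact. Then $m_g:=\inf\{g(x):x\in\mathcal{X}_0\}>0$, and there exists $\Delta>0$ such that, with $\mathcal{X}_\Delta:=\{x\in\mathbb{R}^n:\mathrm{dist}(x,\mathcal{X}_0)\le\Delta\}$: (i) $g(x)\ge m_g/2$ for all $x\in\mathcal{X}_\Delta$; (ii) $f$, $g$, $f/g$, $\nabla g$ and $\nabla h_1$ are globally Lipschitz continuous on $\mathcal{X}_\Delta$; (iii) $M_{\nabla g}:=\sup\{\|\nabla g(x)\|_2:x\in\mathcal{X}_\Delta\}$, $M_g:=\sup\{g(x):x\in\mathcal{X}_\Delta\}$ and $M_{f/g}:=\sup\{f(x)/g(x):x\in\mathcal{X}_\Delta\}$ are finite.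
   Context: $\mathrm{dist}(x,S)=\inf\{\|x-y\|_2:y\in S\}$. *)

theory Defs
  imports "HOL-Analysis.Analysis"
begin

definition locally_lipschitz :: "('a::metric_space \<Rightarrow> 'b::metric_space) \<Rightarrow> bool" where
  "locally_lipschitz u \<longleftrightarrow> (\<forall>x. \<exists>e>0. \<exists>L. L-lipschitz_on (ball x e) u)"

definition lipschitz_on_set :: "'a::metric_space set \<Rightarrow> ('a \<Rightarrow> 'b::metric_space) \<Rightarrow> bool" where
  "lipschitz_on_set X u \<longleftrightarrow> (\<exists>L. L-lipschitz_on X u)"

definition Fobj :: "('a \<Rightarrow> real) \<Rightarrow> ('a \<Rightarrow> real) \<Rightarrow> ('a \<Rightarrow> real) \<Rightarrow> ('a \<Rightarrow> real)
    \<Rightarrow> 'a set \<Rightarrow> 'a \<Rightarrow> ereal" where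
  "Fobj f g h1 h2 C x =
     (if g x \<noteq> 0 \<and> x \<in> C then ereal ((f x)^2 / g x + h1 x - h2 x) else \<infinity>)"

definition domF :: "('a \<Rightarrow> ereal) \<Rightarrow> 'a set" where
  "domF F = {x. F x < \<infinity>}"

end

theory Submission
  imports Defs
begin

lemma ll_cont:
  assumes "locally_lipschitz u"
  shows "continuous_on UNIV u"
proof -
  have "isCont u x" for x
  proof -
    obtain e L where e: "e > 0" and L: "L-lipschitz_on (ball x e) u"
      using assms unfolding locally_lipschitz_def by blast
    have "continuous_on (ball x e) u" by (rule lipschitz_on_continuous_on[OF L])
    then show ?thesis using e by (simp add: continuous_on_eq_continuous_at)
  qed
  then show ?thesis by (simp add: continuous_at_imp_continuous_on)
qed

lemma ll_compact:
  assumes "locally_lipschitz u" "compact K"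
  shows "\<exists>L. L-lipschitz_on K u"
proof -
  have ll: "local_lipschitz {0::real} K (\<lambda>_. u)"
  proof (rule local_lipschitzI)
    fix t x assume "t \<in> {0::real}" "x \<in> K"
    obtain e L where e: "e > 0" and L: "L-lipschitz_on (ball x e) u"
      using assms(1) unfolding locally_lipschitz_def by blast
    have "cball x (e/2) \<inter> K \<subseteq> ball x e" using e by auto
    then have "L-lipschitz_on (cball x (e/2) \<inter> K) u"
      using L lipschitz_on_subset by blast
    then show "\<exists>u'>0. \<exists>L. \<forall>t\<in>cball t u' \<inter> {0}. L-lipschitz_on (cball x u' \<inter> K) u"
      using e by (intro exI[of _ "e/2"]) auto
  qed
  obtain L where "\<And>t. t \<in> {0::real} \<Longrightarrow> L-lipschitz_on K u"
    by (rule local_lipschitz_compact_implies_lipschitz[OF ll assms(2)]) auto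
  then show ?thesis by blast
qed

lemma convex_ll:
  fixes f :: "'a::euclidean_space \<Rightarrow> real"
  assumes f: "convex_on UNIV f"
  shows "locally_lipschitz f"
  unfolding locally_lipschitz_def
proof
  fix x
  have cont: "continuous_on UNIV f" using convex_on_continuous[OF open_UNIV f] .
  have "compact (f ` cball x 2)"
    by (rule compact_continuous_image[OF continuous_on_subset[OF cont]]) auto
  then obtain B where B0: "\<forall>y \<in> cball x 2. \<bar>f y\<bar> \<le> B"
    by (auto dest!: compact_imp_bounded simp: bounded_real)
  then have B: "\<And>y. y \<in> cball x 2 \<Longrightarrow> \<bar>f y\<bar> \<le> B" by blast
  have key: "f z - f y \<le> 2 * B * norm (z - y)" if y: "y \<in> ball x 1" and z: "z \<in> ball x 1" for y z
  proof (cases "y = z")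
    case True then show ?thesis by simp
  next
    case False
    define d where "d = norm (z - y)"
    have d: "d > 0" using False by (simp add: d_def)
    define w where "w = z + (1/d) *\<^sub>R (z - y)"
    have "norm (w - x) \<le> norm (z - x) + norm ((1/d) *\<^sub>R (z - y))"
      unfolding w_def by (metis add.commute add_diff_eq norm_triangle_ineq)
    also have "norm ((1/d) *\<^sub>R (z - y)) = 1" using d by (simp add: d_def)
    finally have "norm (w - x) < 2" using z by (simp add: dist_norm norm_minus_commute)
    then have w: "w \<in> cball x 2" by (simp add: dist_norm norm_minus_commute)
    have yc: "y \<in> cball x 2" using y by auto
    define t where "t = d / (1 + d)"
    have t: "0 \<le> t" "t \<le> 1" using d by (auto simp: t_def)
    have t1: "1 - t = 1/(1+d)" and t2: "t * (1/d) = 1/(1+d)" and t3: "t + 1/(1+d) = 1"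
      using d by (simp_all add: t_def field_simps)
    have eq: "(1 - t) *\<^sub>R y + t *\<^sub>R w = z"
    proof -
      have "(1 - t) *\<^sub>R y + t *\<^sub>R w = (1/(1+d)) *\<^sub>R y + t *\<^sub>R z + (t * (1/d)) *\<^sub>R (z - y)"
        unfolding w_def t1 by (simp only: scaleR_add_right scaleR_scaleR add.assoc)
      also have "\<dots> = (1/(1+d)) *\<^sub>R y + t *\<^sub>R z + (1/(1+d)) *\<^sub>R z - (1/(1+d)) *\<^sub>R y"
        unfolding t2 by (simp add: scaleR_diff_right)
      also have "\<dots> = (t + 1/(1+d)) *\<^sub>R z" by (simp add: scaleR_add_left)
      also have "\<dots> = z" unfolding t3 by simp
      finally show ?thesis .
    qed
    have "f z \<le> (1 - t) * f y + t * f w"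
      using convex_onD[OF f t] eq by fastforce
    then have "f z - f y \<le> t * (f w - f y)" by (simp add: algebra_simps)
    also have "\<dots> \<le> t * (2 * B)" using B[OF w] B[OF yc] t by (intro mult_left_mono) auto
    also have "\<dots> \<le> d * (2 * B)"
    proof -
      have "B \<ge> 0" using B[OF yc] by linarith
      moreover have "t \<le> d" using d by (simp add: t_def field_simps)
      ultimately show ?thesis by (intro mult_right_mono) auto
    qed
    finally show ?thesis by (simp add: d_def mult.commute)
  qed
  have B00: "B \<ge> 0" using B[of x] by force
  have "(2*B)-lipschitz_on (ball x 1) f"
  proof (rule lipschitz_onI)
    fix y z assume "y \<in> ball x 1" "z \<in> ball x 1"
    then have "f z - f y \<le> 2 * B * norm (z - y)" "f y - f z \<le> 2 * B * norm (y - z)"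
      using key by auto
    then show "dist (f y) (f z) \<le> 2 * B * dist y z"
      by (simp add: dist_norm norm_minus_commute abs_le_iff dist_real_def)
  qed (use B00 in simp)
  then show "\<exists>e>0. \<exists>L. L-lipschitz_on (ball x e) f" by (intro exI[of _ 1]) auto
qed

lemma c1_ll:
  fixes g :: "'a::euclidean_space \<Rightarrow> real"
  assumes g: "\<forall>x. (g has_derivative (\<lambda>v. Dg x \<bullet> v)) (at x)"
    and Dg: "locally_lipschitz Dg"
  shows "locally_lipschitz g"
  unfolding locally_lipschitz_def
proof
  fix x
  have "compact (Dg ` cball x 1)"
    by (rule compact_continuous_image[OF continuous_on_subset[OF ll_cont[OF Dg]]]) auto
  then obtain B where B0: "\<forall>y \<in> cball x 1. norm (Dg y) \<le> B"
    by (auto dest!: compact_imp_bounded simp: bounded_iff)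
  then have B: "\<And>y. y \<in> cball x 1 \<Longrightarrow> norm (Dg y) \<le> B" by blast
  have B00: "B \<ge> 0" using B[of x] norm_ge_zero[of "Dg x"] by (simp del: norm_ge_zero)
  have "B-lipschitz_on (ball x 1) g"
  proof (rule lipschitz_onI)
    fix y z assume y: "y \<in> ball x 1" and z: "z \<in> ball x 1"
    have "norm (g y - g z) \<le> B * norm (y - z)"
    proof (rule differentiable_bound[where S="ball x 1" and f'="\<lambda>x v. Dg x \<bullet> v"])
      show "(g has_derivative (\<lambda>v. Dg u \<bullet> v)) (at u within ball x 1)" for u
        using g has_derivative_at_withinI by blast
      show "onorm (\<lambda>v. Dg u \<bullet> v) \<le> B" if "u \<in> ball x 1" for u
      proof (rule onorm_le)
        fix v
        have "norm (Dg u \<bullet> v) \<le> norm (Dg u) * norm v" by (simp add: Cauchy_Schwarz_ineq2)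
        also have "\<dots> \<le> B * norm v" using B[of u] that by (intro mult_right_mono) auto
        finally show "norm (Dg u \<bullet> v) \<le> B * norm v" .
      qed
    qed (use y z in auto)
    then show "dist (g y) (g z) \<le> B * dist y z" by (simp add: dist_norm)
  qed (use B00 in simp)
  then show "\<exists>e>0. \<exists>L. L-lipschitz_on (ball x e) g" by (intro exI[of _ 1]) auto
qed

lemma lip_bdd:
  fixes u :: "'a::metric_space \<Rightarrow> 'b::real_normed_vector"
  assumes "L-lipschitz_on K u" "compact K"
  shows "\<exists>M. \<forall>x\<in>K. norm (u x) \<le> M"
proof -
  have "compact (u ` K)"
    by (rule compact_continuous_image[OF lipschitz_on_continuous_on[OF assms(1)] assms(2)])
  then show ?thesis by (auto dest!: compact_imp_bounded simp: bounded_iff)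
qed

lemma lip_div:
  fixes f g :: "'a::metric_space \<Rightarrow> real"
  assumes Lf: "Lf-lipschitz_on K f" and Lg: "Lg-lipschitz_on K g"
    and gc: "\<forall>x\<in>K. c \<le> g x" and c: "c > 0"
    and Mf: "\<forall>x\<in>K. \<bar>f x\<bar> \<le> Mf" and Mg: "\<forall>x\<in>K. \<bar>g x\<bar> \<le> Mg"
  shows "\<exists>L. L-lipschitz_on K (\<lambda>x. f x / g x)"
proof -
  have Lf0: "Lf \<ge> 0" using Lf lipschitz_on_nonneg by blast
  have Lg0: "Lg \<ge> 0" using Lg lipschitz_on_nonneg by blast
  have "(max 0 ((Lf*Mg + Mf*Lg)/c^2))-lipschitz_on K (\<lambda>x. f x / g x)"
  proof (rule lipschitz_onI)
    fix x y assume x: "x \<in> K" and y: "y \<in> K"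
    have gx: "g x \<ge> c" and gy: "g y \<ge> c" using gc x y by auto
    have Mf0: "Mf \<ge> 0" using Mf x by fastforce
    have Mg0: "Mg \<ge> 0" using Mg x by fastforce
    have df: "\<bar>f x - f y\<bar> \<le> Lf * dist x y" using lipschitz_onD[OF Lf x y] by (simp add: dist_real_def)
    have dg: "\<bar>g y - g x\<bar> \<le> Lg * dist x y" using lipschitz_onD[OF Lg x y] by (simp add: dist_real_def abs_minus_commute)
    have eq: "f x / g x - f y / g y = ((f x - f y) * g y + f y * (g y - g x)) / (g x * g y)"
      using gx gy c by (simp add: field_simps)
    have "\<bar>(f x - f y) * g y + f y * (g y - g x)\<bar> \<le> \<bar>f x - f y\<bar> * \<bar>g y\<bar> + \<bar>f y\<bar> * \<bar>g y - g x\<bar>"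
      by (metis abs_mult abs_triangle_ineq)
    also have "\<dots> \<le> (Lf * dist x y) * Mg + Mf * (Lg * dist x y)"
      using df dg Mf Mg x y Mf0 Mg0 by (intro add_mono mult_mono) auto
    also have "\<dots> = (Lf*Mg + Mf*Lg) * dist x y" by (simp add: algebra_simps)
    finally have num: "\<bar>(f x - f y) * g y + f y * (g y - g x)\<bar> \<le> (Lf*Mg + Mf*Lg) * dist x y" .
    have den: "c^2 \<le> g x * g y" using gx gy c by (simp add: power2_eq_square mult_mono)
    have pos: "g x * g y > 0" using gx gy c by simp
    have nn: "0 \<le> (Lf*Mg + Mf*Lg) * dist x y" using Lf0 Lg0 Mf0 Mg0 by simp
    have "\<bar>f x / g x - f y / g y\<bar> = \<bar>(f x - f y) * g y + f y * (g y - g x)\<bar> / (g x * g y)"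
      using eq pos by simp
    also have "\<dots> \<le> (Lf*Mg + Mf*Lg) * dist x y / (g x * g y)"
      using num pos by (simp add: divide_right_mono)
    also have "\<dots> \<le> (Lf*Mg + Mf*Lg) * dist x y / c^2"
      using den nn c pos by (intro divide_left_mono) auto
    also have "\<dots> = ((Lf*Mg + Mf*Lg)/c^2) * dist x y" by simp
    also have "\<dots> \<le> max 0 ((Lf*Mg + Mf*Lg)/c^2) * dist x y" by (intro mult_right_mono) auto
    finally show "dist (f x / g x) (f y / g y) \<le> max 0 ((Lf*Mg + Mf*Lg)/c^2) * dist x y"
      by (simp add: dist_real_def)
  qed simp
  then show ?thesis by blast
qed

theorem lemma4p1:
  fixes f g h1 h2 :: "'a::euclidean_space \<Rightarrow> real"
    and Dg Dh1 :: "'a \<Rightarrow> 'a"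
    and C :: "'a set" and x0 :: 'a
  assumes f_nonneg: "\<forall>x. f x \<ge> 0"
    and g_nonneg: "\<forall>x. g x \<ge> 0"
    and C_closed: "closed C" and C_convex: "convex C"
    and C_Omega: "C \<inter> {x. g x \<noteq> 0} \<noteq> {}"
    and f_convex: "convex_on UNIV f"
    and g_grad: "\<forall>x. (g has_derivative (\<lambda>v. Dg x \<bullet> v)) (at x)"
    and Dg_loclip: "locally_lipschitz Dg"
    and h1_grad: "\<forall>x. (h1 has_derivative (\<lambda>v. Dh1 x \<bullet> v)) (at x)"
    and Dh1_loclip: "locally_lipschitz Dh1"
    and h2_convex: "convex_on UNIV h2"
    and x0_dom: "x0 \<in> domF (Fobj f g h1 h2 C)"
    and X0_compact: "compact {x \<in> domF (Fobj f g h1 h2 C).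
                        Fobj f g h1 h2 C x \<le> Fobj f g h1 h2 C x0}"
  shows "let X0 = {x \<in> domF (Fobj f g h1 h2 C). Fobj f g h1 h2 C x \<le> Fobj f g h1 h2 C x0};
             mg = Inf (g ` X0)
         in mg > 0 \<and>
            (\<exists>\<Delta>>0. let XD = {x. infdist x X0 \<le> \<Delta>} in
               (\<forall>x\<in>XD. g x \<ge> mg / 2) \<and>
               lipschitz_on_set XD f \<and> lipschitz_on_set XD g \<and>
               lipschitz_on_set XD (\<lambda>x. f x / g x) \<and>
               lipschitz_on_set XD Dg \<and> lipschitz_on_set XD Dh1 \<and>
               bdd_above ((\<lambda>x. norm (Dg x)) ` XD) \<and>
               bdd_above (g ` XD) \<and>
               bdd_above ((\<lambda>x. f x / g x) ` XD))"
proof -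
  define F where "F = Fobj f g h1 h2 C"
  define X0 where "X0 = {x \<in> domF F. F x \<le> F x0}"
  have X0c: "compact X0" using X0_compact by (simp add: X0_def F_def)
  have x0X: "x0 \<in> X0" using x0_dom by (simp add: X0_def F_def)
  have X0ne: "X0 \<noteq> {}" using x0X by blast
  have gpos: "g x > 0" if "x \<in> X0" for x
  proof -
    have "F x < \<infinity>" using that by (simp add: X0_def domF_def)
    then have "g x \<noteq> 0" by (auto simp: F_def Fobj_def split: if_splits)
    then show ?thesis using g_nonneg by (metis less_eq_real_def)
  qed
  have gcont: "continuous_on UNIV g"
    using g_grad has_derivative_continuous continuous_at_imp_continuous_on by blast
  obtain y where y: "y \<in> X0" and ymin: "\<forall>x\<in>X0. g y \<le> g x"
    using continuous_attains_inf[OF X0c X0ne continuous_on_subset[OF gcont]] by blast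
  define mg where "mg = Inf (g ` X0)"
  have mgy: "mg = g y" unfolding mg_def using y ymin by (intro cInf_eq_minimum) auto
  have mgpos: "mg > 0" using gpos[OF y] mgy by simp
  define K1 where "K1 = {x. infdist x X0 \<le> 1}"
  have K1c: "compact K1" unfolding K1_def using compact_infdist_le[OF X0ne X0c] by simp
  have "uniformly_continuous_on K1 g"
    by (rule compact_uniformly_continuous[OF continuous_on_subset[OF gcont] K1c]) auto
  then obtain d where d: "d > 0" and dU: "\<forall>x\<in>K1. \<forall>x'\<in>K1. dist x' x < d \<longrightarrow> dist (g x') (g x) < mg/2"
    unfolding uniformly_continuous_on_def using mgpos by (meson half_gt_zero)
  define \<Delta> where "\<Delta> = min 1 (d/2)"
  have \<Delta>pos: "\<Delta> > 0" using d by (simp add: \<Delta>_def)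
  define XD where "XD = {x. infdist x X0 \<le> \<Delta>}"
  have XDc: "compact XD" unfolding XD_def using compact_infdist_le[OF X0ne X0c \<Delta>pos] .
  have XDK1: "XD \<subseteq> K1" unfolding XD_def K1_def \<Delta>_def by auto
  have gXD: "g x \<ge> mg / 2" if x: "x \<in> XD" for x
  proof -
    obtain a where a: "a \<in> X0" "infdist x X0 = dist x a"
      using infdist_attains_inf[OF compact_imp_closed[OF X0c] X0ne] by blast
    have aK: "a \<in> K1" using a by (simp add: K1_def)
    have xK: "x \<in> K1" using x XDK1 by blast
    have "dist x a < d" using a x d by (simp add: XD_def \<Delta>_def)
    then have "dist (g x) (g a) < mg/2" using dU aK xK by blast
    moreover have "g a \<ge> mg" using ymin a mgy by simp
    ultimately show ?thesis unfolding dist_real_def by linarith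
  qed
  obtain Lf where Lf: "Lf-lipschitz_on XD f" using ll_compact[OF convex_ll[OF f_convex] XDc] by blast
  obtain Lg where Lg: "Lg-lipschitz_on XD g" using ll_compact[OF c1_ll[OF g_grad Dg_loclip] XDc] by blast
  obtain LDg where LDg: "LDg-lipschitz_on XD Dg" using ll_compact[OF Dg_loclip XDc] by blast
  obtain LDh where LDh: "LDh-lipschitz_on XD Dh1" using ll_compact[OF Dh1_loclip XDc] by blast
  obtain Mf where Mf: "\<forall>x\<in>XD. \<bar>f x\<bar> \<le> Mf" using lip_bdd[OF Lf XDc] by auto
  obtain Mg where Mg: "\<forall>x\<in>XD. \<bar>g x\<bar> \<le> Mg" using lip_bdd[OF Lg XDc] by auto
  obtain MDg where MDg: "\<forall>x\<in>XD. norm (Dg x) \<le> MDg" using lip_bdd[OF LDg XDc] by auto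
  obtain Lq where Lq: "Lq-lipschitz_on XD (\<lambda>x. f x / g x)"
    using lip_div[OF Lf Lg _ _ Mf Mg, of "mg/2"] gXD mgpos by auto
  obtain Mq where Mq: "\<forall>x\<in>XD. \<bar>f x / g x\<bar> \<le> Mq" using lip_bdd[OF Lq XDc] by auto
  have main: "mg > 0 \<and> (\<exists>\<Delta>>0. (\<forall>x\<in>{x. infdist x X0 \<le> \<Delta>}. g x \<ge> mg / 2) \<and>
      lipschitz_on_set {x. infdist x X0 \<le> \<Delta>} f \<and> lipschitz_on_set {x. infdist x X0 \<le> \<Delta>} g \<and>
      lipschitz_on_set {x. infdist x X0 \<le> \<Delta>} (\<lambda>x. f x / g x) \<and>
      lipschitz_on_set {x. infdist x X0 \<le> \<Delta>} Dg \<and> lipschitz_on_set {x. infdist x X0 \<le> \<Delta>} Dh1 \<and>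
      bdd_above ((\<lambda>x. norm (Dg x)) ` {x. infdist x X0 \<le> \<Delta>}) \<and>
      bdd_above (g ` {x. infdist x X0 \<le> \<Delta>}) \<and>
      bdd_above ((\<lambda>x. f x / g x) ` {x. infdist x X0 \<le> \<Delta>}))"
  proof (intro conjI exI[of _ \<Delta>])
    show "mg > 0" by (rule mgpos)
    show "\<Delta> > 0" by (rule \<Delta>pos)
    show "\<forall>x\<in>{x. infdist x X0 \<le> \<Delta>}. g x \<ge> mg / 2" using gXD XD_def by blast
    show "lipschitz_on_set {x. infdist x X0 \<le> \<Delta>} f" using Lf XD_def lipschitz_on_set_def by blast
    show "lipschitz_on_set {x. infdist x X0 \<le> \<Delta>} g" using Lg XD_def lipschitz_on_set_def by blast
    show "lipschitz_on_set {x. infdist x X0 \<le> \<Delta>} (\<lambda>x. f x / g x)" using Lq XD_def lipschitz_on_set_def by blast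
    show "lipschitz_on_set {x. infdist x X0 \<le> \<Delta>} Dg" using LDg XD_def lipschitz_on_set_def by blast
    show "lipschitz_on_set {x. infdist x X0 \<le> \<Delta>} Dh1" using LDh XD_def lipschitz_on_set_def by blast
    show "bdd_above ((\<lambda>x. norm (Dg x)) ` {x. infdist x X0 \<le> \<Delta>})"
      using MDg unfolding XD_def bdd_above_def by blast
    show "bdd_above (g ` {x. infdist x X0 \<le> \<Delta>})"
      using Mg unfolding XD_def bdd_above_def by (fastforce dest: abs_le_D1)
    show "bdd_above ((\<lambda>x. f x / g x) ` {x. infdist x X0 \<le> \<Delta>})"
      using Mq unfolding XD_def bdd_above_def by (fastforce dest: abs_le_D1)
  qed
  show ?thesis unfolding Let_def using main by (simp add: X0_def mg_def F_def)
qed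

end
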